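(* For every $N\times N$ stochastic matrix $A$ and every $t\geq 1$, one has $\frac{1}{N}\leq \tau_t(A)\leq 1$. Moreover, if $A$ is reducible, then $\tau_t(A)\leq 1-\frac{1}{N+1}$ for all $t\geq 1$.
   Context: Let $X$ be a square-integrable real random variable with $\mathbb E X=\theta$ and $\mathrm{Var}(X)=\sigma^2>0$. Fix an integer $N\geq 2$. For $i\in\{1,\dots,N\}$ and $t\geq 1$ let $X_t^{(i)}$ be random variables distributed as $X$, mutually independent over both $i$ and $t$, and write $\mathbf X_t=(X_t^{(1)},\dots,X_t^{(N)})^\top$. Let $A=(a_{ij})_{1\le i,j\le N}$ be a stochastic matrix ($a_{ij}\geq 0$ and every row sums to $1$). Define $\hat{\boldsymbol\theta}_1=\mathbf X_1$ and $\hat{\boldsymbol\theta}_{t+1}=\frac{t}{t+1}A\hat{\boldsymbol\theta}_t+\frac{1}{t+1}\mathbf X_{t+1}$ for $t\geq 1$. Let $\bar{\mathbb X}_{Nt}=\frac{1}{Nt}\sum_{i=1}^N\sum_{k=1}^t X_k^{(i)}$, $\mathbf 1=(1,\dots,1)^\top$, and let $\|\cdot\|$ denote the Euclidean norm. The performance ratio is $\tau_t(A)=\dfrac{\mathbb E\|(\bar{\mathbb X}_{Nt}-\theta)\mathbf 1\|^2}{\mathbb E\|\hat{\boldsymbol\theta}_t-\theta\mathbf 1\|^2}$, $t\geq 1$. A stochastic matrix $A$ is irreducible if for every pair $(i,j)$ there is an integer $k\geq 0$ with $(A^k)_{ij}\neq 0$, and reducible otherwise. *)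

theory Defs
  imports "HOL-Probability.Probability"
begin

text \<open>Matrices are indexed by a finite type 'n with N = CARD('n).\<close>

definition stochastic_matrix :: "real^'n^'n \<Rightarrow> bool" where
  "stochastic_matrix A \<longleftrightarrow> (\<forall>i j. A $ i $ j \<ge> 0) \<and> (\<forall>i. (\<Sum>j\<in>UNIV. A $ i $ j) = 1)"

primrec mat_pow :: "real^'n^'n \<Rightarrow> nat \<Rightarrow> real^'n^'n" where
  "mat_pow A 0 = mat 1"
| "mat_pow A (Suc k) = A ** mat_pow A k"

definition irreducible_matrix :: "real^'n^'n \<Rightarrow> bool" where
  "irreducible_matrix A \<longleftrightarrow> (\<forall>i j. \<exists>k. mat_pow A k $ i $ j \<noteq> 0)"

text \<open>Observations: X t i \<omega> is X_t^{(i)}(\<omega>), t \<ge> 1.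
  est_aux A X n = \<theta>hat_{n+1}.\<close>

primrec est_aux :: "real^'n^'n \<Rightarrow> (nat \<Rightarrow> 'n \<Rightarrow> 'a \<Rightarrow> real) \<Rightarrow> nat \<Rightarrow> 'a \<Rightarrow> real^'n" where
  "est_aux A X 0 = (\<lambda>\<omega>. \<chi> i. X 1 i \<omega>)"
| "est_aux A X (Suc n) = (\<lambda>\<omega>.
     (real (Suc n) / real (Suc n + 1)) *\<^sub>R (A *v est_aux A X n \<omega>)
     + (1 / real (Suc n + 1)) *\<^sub>R (\<chi> i. X (Suc n + 1) i \<omega>))"

definition theta_hat :: "real^'n^'n \<Rightarrow> (nat \<Rightarrow> 'n \<Rightarrow> 'a \<Rightarrow> real) \<Rightarrow> nat \<Rightarrow> 'a \<Rightarrow> real^'n" where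
  "theta_hat A X t = est_aux A X (t - 1)"

definition sample_mean :: "(nat \<Rightarrow> 'n::finite \<Rightarrow> 'a \<Rightarrow> real) \<Rightarrow> nat \<Rightarrow> 'a \<Rightarrow> real" where
  "sample_mean X t \<omega> = (1 / (real CARD('n) * real t)) * (\<Sum>i\<in>UNIV. \<Sum>k=1..t. X k i \<omega>)"

definition perf_ratio :: "'a measure \<Rightarrow> real \<Rightarrow> real^'n^'n \<Rightarrow> (nat \<Rightarrow> 'n \<Rightarrow> 'a \<Rightarrow> real) \<Rightarrow> nat \<Rightarrow> real" where
  "perf_ratio M \<theta> A X t =
     (\<integral>\<omega>. (norm ((sample_mean X t \<omega> - \<theta>) *\<^sub>R (\<chi> i. 1 :: real^'n)))\<^sup>2 \<partial>M)
     / (\<integral>\<omega>. (norm (theta_hat A X t \<omega> - \<theta> *\<^sub>R (\<chi> i. 1)))\<^sup>2 \<partial>M)"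

end

theory Submission
  imports Defs
begin

definition fro :: "real^'n^'n \<Rightarrow> real" where
  "fro P = (\<Sum>i\<in>UNIV. \<Sum>l\<in>UNIV. (P $ i $ l)\<^sup>2)"

lemma stoch_mult:
  assumes "stochastic_matrix A" "stochastic_matrix B"
  shows "stochastic_matrix (A ** B)"
proof -
  have "(\<Sum>j\<in>UNIV. (A ** B) $ i $ j) = 1" for i
  proof -
    have "(\<Sum>j\<in>UNIV. (A ** B) $ i $ j) = (\<Sum>j\<in>UNIV. \<Sum>l\<in>UNIV. A $ i $ l * B $ l $ j)"
      by (simp add: matrix_matrix_mult_def)
    also have "\<dots> = (\<Sum>l\<in>UNIV. A $ i $ l * (\<Sum>j\<in>UNIV. B $ l $ j))"
      by (subst sum.swap) (simp add: sum_distrib_left)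
    also have "\<dots> = 1" using assms by (simp add: stochastic_matrix_def)
    finally show ?thesis .
  qed
  moreover have "(A ** B) $ i $ j \<ge> 0" for i j
    using assms by (auto simp: matrix_matrix_mult_def stochastic_matrix_def intro!: sum_nonneg)
  ultimately show ?thesis by (simp add: stochastic_matrix_def)
qed

lemma stoch_id: "stochastic_matrix (mat 1 :: real^'n^'n)"
  by (simp add: stochastic_matrix_def mat_def)

lemma stoch_pow: "stochastic_matrix A \<Longrightarrow> stochastic_matrix (mat_pow A k)"
  by (induction k) (auto intro: stoch_mult stoch_id)

lemma mat_pow_add: "mat_pow A (k + m) = mat_pow A k ** mat_pow A m"
  by (induction k) (simp_all add: matrix_mul_assoc)

lemma stoch_one: "stochastic_matrix P \<Longrightarrow> P *v (\<chi> i. 1) = (\<chi> i. 1)"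
  by (simp add: stochastic_matrix_def matrix_vector_mult_def vec_eq_iff)

lemma row_sq_ge:
  fixes r :: "'b \<Rightarrow> real"
  assumes "finite S" "S \<noteq> {}" "(\<Sum>l\<in>S. r l) = 1"
  shows "(\<Sum>l\<in>S. (r l)\<^sup>2) \<ge> 1 / card S"
proof -
  define c where "c = real (card S)"
  have c: "c > 0" using assms by (simp add: c_def card_gt_0_iff)
  have "0 \<le> (\<Sum>l\<in>S. (r l - 1/c)\<^sup>2)" by (simp add: sum_nonneg)
  also have "\<dots> = (\<Sum>l\<in>S. (r l)\<^sup>2 - 2/c * r l + (1/c)\<^sup>2)"
    by (intro sum.cong) (simp_all add: power2_diff)
  also have "\<dots> = (\<Sum>l\<in>S. (r l)\<^sup>2) - 2/c * (\<Sum>l\<in>S. r l) + c * (1/c)\<^sup>2"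
    by (simp only: sum.distrib sum_subtractf sum_distrib_left[symmetric] sum_constant c_def)
  also have "\<dots> = (\<Sum>l\<in>S. (r l)\<^sup>2) - 1/c"
    using c assms(3) by (simp add: power2_eq_square field_simps)
  finally show ?thesis by (simp add: c_def)
qed

lemma row_sq_le:
  fixes r :: "'b \<Rightarrow> real"
  assumes "finite S" "\<And>l. l \<in> S \<Longrightarrow> r l \<ge> 0" "(\<Sum>l\<in>S. r l) = 1"
  shows "(\<Sum>l\<in>S. (r l)\<^sup>2) \<le> 1"
proof -
  have "r l \<le> 1" if "l \<in> S" for l
    using member_le_sum[of l S r] assms that by auto
  then have "(\<Sum>l\<in>S. (r l)\<^sup>2) \<le> (\<Sum>l\<in>S. r l)"
    using assms by (intro sum_mono) (simp add: power2_eq_square mult_left_le)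
  then show ?thesis using assms by simp
qed

lemma fro_bounds:
  fixes P :: "real^'n^'n"
  assumes "stochastic_matrix P"
  shows "1 \<le> fro P" "fro P \<le> real CARD('n)"
proof -
  have r: "1 / real CARD('n) \<le> (\<Sum>l\<in>UNIV. (P $ i $ l)\<^sup>2) \<and> (\<Sum>l\<in>UNIV. (P $ i $ l)\<^sup>2) \<le> 1" for i
    using row_sq_ge[of UNIV "\<lambda>l. P $ i $ l"] row_sq_le[of UNIV "\<lambda>l. P $ i $ l"] assms
    by (auto simp: stochastic_matrix_def)
  have "(\<Sum>i\<in>(UNIV::'n set). 1 / real CARD('n)) \<le> fro P"
    unfolding fro_def using r by (intro sum_mono) auto
  then show "1 \<le> fro P" by simp
  have "fro P \<le> (\<Sum>i\<in>(UNIV::'n set). 1)"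
    unfolding fro_def using r by (intro sum_mono) auto
  then show "fro P \<le> real CARD('n)" by simp
qed

lemma fro_reducible:
  fixes A :: "real^'n^'n"
  assumes st: "stochastic_matrix A" and red: "\<not> irreducible_matrix A"
  shows "1 + 1 / real CARD('n) \<le> fro (mat_pow A m)"
proof -
  obtain i0 j0 where z: "\<And>k. mat_pow A k $ i0 $ j0 = 0"
    using red unfolding irreducible_matrix_def by blast
  define S where "S = {l. \<exists>k. mat_pow A k $ i0 $ l \<noteq> 0}"
  have i0S: "i0 \<in> S" unfolding S_def by (auto intro!: exI[of _ 0] simp: mat_def)
  have j0S: "j0 \<notin> S" unfolding S_def using z by auto
  have nn: "\<And>k i j. mat_pow A k $ i $ j \<ge> 0"
    using stoch_pow[OF st] by (auto simp: stochastic_matrix_def)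
  have closed: "mat_pow A m $ l $ q = 0" if "l \<in> S" "q \<notin> S" for l q
  proof (rule ccontr)
    assume ne: "mat_pow A m $ l $ q \<noteq> 0"
    obtain k where k: "mat_pow A k $ i0 $ l \<noteq> 0" using \<open>l \<in> S\<close> S_def by auto
    have p1: "mat_pow A k $ i0 $ l > 0" using k nn[of k i0 l] by linarith
    have p2: "mat_pow A m $ l $ q > 0" using ne nn[of m l q] by linarith
    have "mat_pow A (k + m) $ i0 $ q = (\<Sum>r\<in>UNIV. mat_pow A k $ i0 $ r * mat_pow A m $ r $ q)"
      by (simp add: mat_pow_add matrix_matrix_mult_def)
    also have "\<dots> \<ge> mat_pow A k $ i0 $ l * mat_pow A m $ l $ q"
      by (rule member_le_sum) (auto intro: mult_nonneg_nonneg nn)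
    finally have "mat_pow A (k + m) $ i0 $ q \<ge> mat_pow A k $ i0 $ l * mat_pow A m $ l $ q" .
    moreover have "mat_pow A k $ i0 $ l * mat_pow A m $ l $ q > 0" using p1 p2 by simp
    ultimately have "mat_pow A (k + m) $ i0 $ q \<noteq> 0" by linarith
    then have "q \<in> S" unfolding S_def by blast
    then show False using \<open>q \<notin> S\<close> by simp
  qed
  have stP: "stochastic_matrix (mat_pow A m)" by (rule stoch_pow[OF st])
  have rowS: "(\<Sum>q\<in>S. mat_pow A m $ l $ q) = 1" if "l \<in> S" for l
  proof -
    have "(\<Sum>q\<in>S. mat_pow A m $ l $ q) = (\<Sum>q\<in>UNIV. mat_pow A m $ l $ q)"
      by (rule sum.mono_neutral_left) (auto intro: closed that)
    then show ?thesis using stP by (simp add: stochastic_matrix_def)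
  qed
  have Sne: "S \<noteq> {}" using i0S by auto
  define s where "s = card S"
  have sle: "s + 1 \<le> CARD('n)"
  proof -
    have "S \<subset> UNIV" using j0S by auto
    then have "card S < CARD('n)" by (simp add: psubset_card_mono)
    then show ?thesis by (simp add: s_def)
  qed
  have spos: "s > 0" using Sne by (simp add: s_def card_gt_0_iff)
  have rS: "1 / real s \<le> (\<Sum>q\<in>UNIV. (mat_pow A m $ l $ q)\<^sup>2)" if "l \<in> S" for l
  proof -
    have "1 / real s \<le> (\<Sum>q\<in>S. (mat_pow A m $ l $ q)\<^sup>2)"
      using row_sq_ge[of S "\<lambda>q. mat_pow A m $ l $ q"] rowS[OF that] Sne by (simp add: s_def)
    also have "\<dots> \<le> (\<Sum>q\<in>UNIV. (mat_pow A m $ l $ q)\<^sup>2)"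
      by (rule sum_mono2) auto
    finally show ?thesis .
  qed
  have rN: "1 / real CARD('n) \<le> (\<Sum>q\<in>UNIV. (mat_pow A m $ l $ q)\<^sup>2)" for l
    using row_sq_ge[of UNIV "\<lambda>q. mat_pow A m $ l $ q"] stP by (auto simp: stochastic_matrix_def)
  have "fro (mat_pow A m) = (\<Sum>l\<in>S. \<Sum>q\<in>UNIV. (mat_pow A m $ l $ q)\<^sup>2)
        + (\<Sum>l\<in>UNIV - S. \<Sum>q\<in>UNIV. (mat_pow A m $ l $ q)\<^sup>2)"
    unfolding fro_def using sum.subset_diff[of S UNIV "\<lambda>l. \<Sum>q\<in>UNIV. (mat_pow A m $ l $ q)\<^sup>2"]
    by (simp add: add.commute)
  also have "\<dots> \<ge> (\<Sum>l\<in>S. 1 / real s) + (\<Sum>l\<in>UNIV - S. 1 / real CARD('n))"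
    by (intro add_mono sum_mono rS rN) auto
  also have "(\<Sum>l\<in>S. 1 / real s) = 1" using spos Sne by (simp add: s_def)
  also have "(\<Sum>l\<in>UNIV - S. 1 / real CARD('n)) = real (CARD('n) - s) / real CARD('n)"
    by (simp add: s_def card_Diff_subset)
  finally have "fro (mat_pow A m) \<ge> 1 + real (CARD('n) - s) / real CARD('n)" .
  moreover have "real (CARD('n) - s) \<ge> 1" using sle by linarith
  then have "1 / real CARD('n) \<le> real (CARD('n) - s) / real CARD('n)"
    by (intro divide_right_mono) auto
  ultimately show ?thesis by linarith
qed

lemma mat1_sum: "(\<Sum>l\<in>UNIV. (mat 1 :: real^'n^'n) $ i $ l * z l) = z i"
proof -
  have "(mat 1 :: real^'n^'n) $ i $ l * z l = (if i = l then z l else 0)" for l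
    by (simp add: mat_def)
  then show ?thesis by simp
qed

lemma alg:
  fixes m :: real assumes "m \<ge> 0"
  shows "(m+1)/(m+2) * (th + s/(m+1)) + x/(m+2) - th = 1/(m+2) * (s + (x - th))"
proof -
  have a: "m + 1 \<noteq> 0" "m + 2 \<noteq> 0" using assms by auto
  have "th + s/(m+1) = ((m+1)*th + s)/(m+1)"
    using a by (simp add: field_simps)
  then have "(m+1)/(m+2) * (th + s/(m+1)) = (m+1)/(m+2) * (((m+1)*th + s)/(m+1))" by simp
  also have "\<dots> = ((m+1)*th + s)/(m+2)" using a by simp
  finally have "(m+1)/(m+2) * (th + s/(m+1)) = ((m+1)*th + s)/(m+2)" .
  also have "\<dots> = ((m+2)*th + (s - th))/(m+2)" by (simp add: algebra_simps)
  also have "\<dots> = th + (s - th)/(m+2)" using a by (simp add: add_divide_distrib)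
  finally show ?thesis by (simp add: diff_divide_distrib add_divide_distrib)
qed

lemma est_comp:
  fixes A :: "real^'n^'n"
  assumes st: "stochastic_matrix A"
  shows "est_aux A X n \<omega> $ i - \<theta> =
    (1 / real (n + 1)) * (\<Sum>k\<in>{1..n+1}. \<Sum>l\<in>UNIV. mat_pow A (n + 1 - k) $ i $ l * (X k l \<omega> - \<theta>))"
proof (induction n arbitrary: i)
  case 0
  have "(\<Sum>l\<in>UNIV. (mat 1 :: real^'n^'n) $ i $ l * (X 1 l \<omega> - \<theta>)) = X 1 i \<omega> - \<theta>"
    by (simp add: mat1_sum)
  then show ?case by simp
next
  case (Suc n)
  define S where "S j = (\<Sum>k\<in>{1..n+1}. \<Sum>l\<in>UNIV. mat_pow A (n + 1 - k) $ j $ l * (X k l \<omega> - \<theta>))" for j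
  have IH: "est_aux A X n \<omega> $ j = \<theta> + S j / real (n + 1)" for j
    using Suc.IH[of j] by (simp add: S_def)
  have rs: "(\<Sum>j\<in>UNIV. A $ i $ j) = 1" using st by (simp add: stochastic_matrix_def)
  have "(A *v est_aux A X n \<omega>) $ i = (\<Sum>j\<in>UNIV. A $ i $ j * (\<theta> + S j / real (n + 1)))"
    by (simp add: matrix_vector_mult_def IH)
  also have "\<dots> = \<theta> * (\<Sum>j\<in>UNIV. A $ i $ j) + (\<Sum>j\<in>UNIV. A $ i $ j * S j) / real (n + 1)"
    by (simp add: distrib_left sum.distrib sum_distrib_left sum_divide_distrib mult.commute)
  finally have Av: "(A *v est_aux A X n \<omega>) $ i = \<theta> + (\<Sum>j\<in>UNIV. A $ i $ j * S j) / real (n + 1)"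
    using rs by simp
  have AS: "(\<Sum>j\<in>UNIV. A $ i $ j * S j) =
      (\<Sum>k\<in>{1..n+1}. \<Sum>l\<in>UNIV. mat_pow A (Suc n + 1 - k) $ i $ l * (X k l \<omega> - \<theta>))"
  proof -
    have "(\<Sum>j\<in>UNIV. A $ i $ j * S j) =
        (\<Sum>j\<in>UNIV. \<Sum>k\<in>{1..n+1}. \<Sum>l\<in>UNIV. A $ i $ j * (mat_pow A (n + 1 - k) $ j $ l * (X k l \<omega> - \<theta>)))"
      by (simp only: S_def sum_distrib_left)
    also have "\<dots> = (\<Sum>k\<in>{1..n+1}. \<Sum>j\<in>UNIV. \<Sum>l\<in>UNIV. A $ i $ j * (mat_pow A (n + 1 - k) $ j $ l * (X k l \<omega> - \<theta>)))"
      by (rule sum.swap)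
    also have "\<dots> = (\<Sum>k\<in>{1..n+1}. \<Sum>l\<in>UNIV. \<Sum>j\<in>UNIV. A $ i $ j * (mat_pow A (n + 1 - k) $ j $ l * (X k l \<omega> - \<theta>)))"
      by (rule sum.cong[OF refl], rule sum.swap)
    also have "\<dots> = (\<Sum>k\<in>{1..n+1}. \<Sum>l\<in>UNIV. mat_pow A (Suc n + 1 - k) $ i $ l * (X k l \<omega> - \<theta>))"
    proof (intro sum.cong refl)
      fix k l assume k: "k \<in> {1..n+1}"
      have e: "Suc n + 1 - k = Suc (n + 1 - k)" using k by auto
      show "(\<Sum>j\<in>UNIV. A $ i $ j * (mat_pow A (n + 1 - k) $ j $ l * (X k l \<omega> - \<theta>))) =
            mat_pow A (Suc n + 1 - k) $ i $ l * (X k l \<omega> - \<theta>)"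
        unfolding e by (simp add: matrix_matrix_mult_def sum_distrib_right mult.assoc)
    qed
    finally show ?thesis .
  qed
  have last: "(\<Sum>l\<in>UNIV. mat_pow A (Suc n + 1 - (Suc n + 1)) $ i $ l * (X (Suc n + 1) l \<omega> - \<theta>))
      = X (Suc n + 1) i \<omega> - \<theta>"
    by (simp add: mat1_sum)
  have split: "(\<Sum>k\<in>{1..Suc n+1}. \<Sum>l\<in>UNIV. mat_pow A (Suc n + 1 - k) $ i $ l * (X k l \<omega> - \<theta>))
     = (\<Sum>k\<in>{1..n+1}. \<Sum>l\<in>UNIV. mat_pow A (Suc n + 1 - k) $ i $ l * (X k l \<omega> - \<theta>))
       + (X (Suc n + 1) i \<omega> - \<theta>)"
    using last by (simp add: sum.cl_ivl_Suc del: One_nat_def)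
  have "est_aux A X (Suc n) \<omega> $ i - \<theta> =
      real (Suc n) / real (Suc n + 1) * (\<theta> + (\<Sum>j\<in>UNIV. A $ i $ j * S j) / real (n + 1))
      + X (Suc n + 1) i \<omega> / real (Suc n + 1) - \<theta>"
    by (simp add: Av)
  also have "\<dots> = (1 / real (Suc n + 1)) * ((\<Sum>j\<in>UNIV. A $ i $ j * S j) + (X (Suc n + 1) i \<omega> - \<theta>))"
    using alg[of "real n" \<theta> "\<Sum>j\<in>UNIV. A $ i $ j * S j" "X (Suc n + 1) i \<omega>"]
    by (simp add: add.commute)
  also have "\<dots> = (1 / real (Suc n + 1)) *
     (\<Sum>k\<in>{1..Suc n+1}. \<Sum>l\<in>UNIV. mat_pow A (Suc n + 1 - k) $ i $ l * (X k l \<omega> - \<theta>))"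
    by (simp only: AS split)
  finally show ?case .
qed

lemma (in prob_space) sq_sum:
  fixes Z :: "'i \<Rightarrow> 'a \<Rightarrow> real"
  assumes fin: "finite J"
    and int: "\<And>p q. p \<in> J \<Longrightarrow> q \<in> J \<Longrightarrow> integrable M (\<lambda>\<omega>. Z p \<omega> * Z q \<omega>)"
    and orth: "\<And>p q. p \<in> J \<Longrightarrow> q \<in> J \<Longrightarrow> p \<noteq> q \<Longrightarrow> (\<integral>\<omega>. Z p \<omega> * Z q \<omega> \<partial>M) = 0"
    and var: "\<And>p. p \<in> J \<Longrightarrow> (\<integral>\<omega>. Z p \<omega> * Z p \<omega> \<partial>M) = s"
  shows "integrable M (\<lambda>\<omega>. (\<Sum>p\<in>J. c p * Z p \<omega>)\<^sup>2)"
    and "(\<integral>\<omega>. (\<Sum>p\<in>J. c p * Z p \<omega>)\<^sup>2 \<partial>M) = s * (\<Sum>p\<in>J. (c p)\<^sup>2)"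
proof -
  have eq: "(\<lambda>\<omega>. (\<Sum>p\<in>J. c p * Z p \<omega>)\<^sup>2) = (\<lambda>\<omega>. \<Sum>p\<in>J. \<Sum>q\<in>J. (c p * c q) * (Z p \<omega> * Z q \<omega>))"
    by (rule ext) (simp add: power2_eq_square sum_product algebra_simps)
  show "integrable M (\<lambda>\<omega>. (\<Sum>p\<in>J. c p * Z p \<omega>)\<^sup>2)"
    unfolding eq by (auto intro!: integrable_sum integrable_mult_right int)
  have "(\<integral>\<omega>. (\<Sum>p\<in>J. c p * Z p \<omega>)\<^sup>2 \<partial>M) =
      (\<Sum>p\<in>J. \<Sum>q\<in>J. (c p * c q) * (\<integral>\<omega>. Z p \<omega> * Z q \<omega> \<partial>M))"
    unfolding eq
    by (simp add: integral_sum integrable_sum integrable_mult_right int)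
  also have "\<dots> = (\<Sum>p\<in>J. \<Sum>q\<in>J. if q = p then (c p)\<^sup>2 * s else 0)"
    by (intro sum.cong refl) (auto simp: orth var power2_eq_square)
  also have "\<dots> = s * (\<Sum>p\<in>J. (c p)\<^sup>2)"
    using fin by (simp add: sum_distrib_left mult.commute)
  finally show "(\<integral>\<omega>. (\<Sum>p\<in>J. c p * Z p \<omega>)\<^sup>2 \<partial>M) = s * (\<Sum>p\<in>J. (c p)\<^sup>2)" .
qed

lemma transfer_distr:
  fixes f :: "real \<Rightarrow> real"
  assumes "Y \<in> borel_measurable M" "X' \<in> borel_measurable M"
    "distr M borel X' = distr M borel Y" "f \<in> borel_measurable borel"
    "integrable M (\<lambda>\<omega>. f (Y \<omega>))"
  shows "integrable M (\<lambda>\<omega>. f (X' \<omega>))" "(\<integral>\<omega>. f (X' \<omega>) \<partial>M) = (\<integral>\<omega>. f (Y \<omega>) \<partial>M)"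
proof -
  have "integrable (distr M borel Y) f" using assms integrable_distr_eq by blast
  then have "integrable (distr M borel X') f" using assms by simp
  then show "integrable M (\<lambda>\<omega>. f (X' \<omega>))" using assms integrable_distr_eq by blast
  have "(\<integral>\<omega>. f (X' \<omega>) \<partial>M) = integral\<^sup>L (distr M borel X') f"
    using integral_distr[OF assms(2) assms(4)] by simp
  also have "\<dots> = integral\<^sup>L (distr M borel Y) f" using assms by simp
  also have "\<dots> = (\<integral>\<omega>. f (Y \<omega>) \<partial>M)" using integral_distr[OF assms(1) assms(4)] by simp
  finally show "(\<integral>\<omega>. f (X' \<omega>) \<partial>M) = (\<integral>\<omega>. f (Y \<omega>) \<partial>M)" .
qed

lemma norm_sq_vec: "(norm (v :: real^'n))\<^sup>2 = (\<Sum>i\<in>UNIV. (v $ i)\<^sup>2)"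
  by (simp only: power2_norm_eq_inner inner_vec_def) (simp add: power2_eq_square)

theorem proposition1:
  fixes M :: "'a measure" and Y :: "'a \<Rightarrow> real"
    and X :: "nat \<Rightarrow> 'n::finite \<Rightarrow> 'a \<Rightarrow> real"
    and A :: "real^'n^'n" and t :: nat
  assumes "prob_space M"
    and "Y \<in> borel_measurable M"
    and "integrable M (\<lambda>\<omega>. (Y \<omega>)\<^sup>2)"
    and "(\<integral>\<omega>. (Y \<omega> - (\<integral>\<omega>'. Y \<omega>' \<partial>M))\<^sup>2 \<partial>M) > 0"
    and "CARD('n) \<ge> 2"
    and "prob_space.indep_vars M (\<lambda>_. borel) (\<lambda>(k, i). X k i) ({1..} \<times> UNIV)"
    and "\<And>k i. k \<ge> 1 \<Longrightarrow> distr M borel (X k i) = distr M borel Y"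
    and "stochastic_matrix A"
    and "t \<ge> 1"
  shows "1 / real CARD('n) \<le> perf_ratio M (\<integral>\<omega>. Y \<omega> \<partial>M) A X t
         \<and> perf_ratio M (\<integral>\<omega>. Y \<omega> \<partial>M) A X t \<le> 1
         \<and> (\<not> irreducible_matrix A \<longrightarrow>
              perf_ratio M (\<integral>\<omega>. Y \<omega> \<partial>M) A X t \<le> 1 - 1 / (real CARD('n) + 1))"
proof -
  interpret P: prob_space M by fact
  define \<theta> where "\<theta> = (\<integral>\<omega>. Y \<omega> \<partial>M)"
  define \<sigma>2 where "\<sigma>2 = (\<integral>\<omega>. (Y \<omega> - \<theta>)\<^sup>2 \<partial>M)"
  define N where "N = real CARD('n)"
  have Ym: "Y \<in> borel_measurable M" by fact
  have Yint: "integrable M Y"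
    by (rule P.square_integrable_imp_integrable[OF assms(2) assms(3)])
  have Yc: "integrable M (\<lambda>\<omega>. (Y \<omega> - \<theta>)\<^sup>2)"
  proof -
    have eq: "(\<lambda>\<omega>. (Y \<omega> - \<theta>)\<^sup>2) = (\<lambda>\<omega>. (Y \<omega>)\<^sup>2 - 2 * \<theta> * Y \<omega> + \<theta>\<^sup>2)"
      by (rule ext) (simp add: power2_diff)
    show ?thesis unfolding eq using assms(3) Yint by auto
  qed
  have \<sigma>pos: "\<sigma>2 > 0" using assms(4) by (simp add: \<sigma>2_def \<theta>_def)
  have Xm: "X k i \<in> borel_measurable M" if "k \<ge> 1" for k i
  proof -
    have "\<forall>p\<in>{1..} \<times> UNIV. (\<lambda>(k, i). X k i) p \<in> measurable M borel"
      using assms(6) unfolding P.indep_vars_def2 by blast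
    then show ?thesis using that by force
  qed
  have Xint: "integrable M (X k i)" "(\<integral>\<omega>. X k i \<omega> \<partial>M) = \<theta>" if "k \<ge> 1" for k i
    using transfer_distr[OF Ym Xm[OF that] assms(7)[OF that], of "\<lambda>x. x"] Yint
    by (auto simp: \<theta>_def)
  have Xvar: "integrable M (\<lambda>\<omega>. (X k i \<omega> - \<theta>)\<^sup>2)" "(\<integral>\<omega>. (X k i \<omega> - \<theta>)\<^sup>2 \<partial>M) = \<sigma>2"
    if "k \<ge> 1" for k i
    using transfer_distr[OF Ym Xm[OF that] assms(7)[OF that], of "\<lambda>x. (x - \<theta>)\<^sup>2"] Yc
    by (auto simp: \<sigma>2_def)
  define Z where "Z = (\<lambda>p \<omega>. (\<lambda>x. x - \<theta>) ((\<lambda>(k, i). X k i) p \<omega>))"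
  define J where "J = {1..t} \<times> (UNIV :: 'n set)"
  have ZJ: "Z (k, l) \<omega> = X k l \<omega> - \<theta>" for k l \<omega> by (simp add: Z_def)
  have indZ: "P.indep_vars (\<lambda>_. borel) Z ({1..} \<times> UNIV)"
    unfolding Z_def by (rule P.indep_vars_compose2[OF assms(6)]) auto
  have Jsub: "J \<subseteq> {1..} \<times> UNIV" by (auto simp: J_def)
  have finJ: "finite J" by (simp add: J_def)
  have Zi: "integrable M (Z p)" "(\<integral>\<omega>. Z p \<omega> \<partial>M) = 0" if pJ: "p \<in> J" for p
  proof -
    obtain k l where p: "p = (k, l)" and k: "k \<ge> 1" using pJ by (cases p) (auto simp: J_def)
    have "Z p = (\<lambda>\<omega>. X k l \<omega> - \<theta>)" by (rule ext) (simp add: p ZJ)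
    then show "integrable M (Z p)" "(\<integral>\<omega>. Z p \<omega> \<partial>M) = 0"
      using Xint[OF k, of l] by (auto simp: P.prob_space)
  qed
  have Zsq: "integrable M (\<lambda>\<omega>. Z p \<omega> * Z p \<omega>)" "(\<integral>\<omega>. Z p \<omega> * Z p \<omega> \<partial>M) = \<sigma>2"
    if pJ: "p \<in> J" for p
  proof -
    obtain k l where p: "p = (k, l)" and k: "k \<ge> 1" using pJ by (cases p) (auto simp: J_def)
    have "(\<lambda>\<omega>. Z p \<omega> * Z p \<omega>) = (\<lambda>\<omega>. (X k l \<omega> - \<theta>)\<^sup>2)"
      by (rule ext) (simp add: p ZJ power2_eq_square)
    then show "integrable M (\<lambda>\<omega>. Z p \<omega> * Z p \<omega>)" "(\<integral>\<omega>. Z p \<omega> * Z p \<omega> \<partial>M) = \<sigma>2"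
      using Xvar[OF k, of l] by auto
  qed
  have Zpq: "integrable M (\<lambda>\<omega>. Z p \<omega> * Z q \<omega>)" "(\<integral>\<omega>. Z p \<omega> * Z q \<omega> \<partial>M) = 0"
    if "p \<in> J" "q \<in> J" "p \<noteq> q" for p q
  proof -
    have ind2: "P.indep_vars (\<lambda>_. borel) Z {p, q}"
      by (rule P.indep_vars_subset[OF indZ]) (use that Jsub in auto)
    have pr: "(\<Prod>r\<in>{p, q}. Z r \<omega>) = Z p \<omega> * Z q \<omega>" for \<omega> using that(3) by simp
    have i: "\<And>r. r \<in> {p, q} \<Longrightarrow> integrable M (Z r)" using Zi that by auto
    show "integrable M (\<lambda>\<omega>. Z p \<omega> * Z q \<omega>)"
      using P.indep_vars_integrable[OF _ ind2 i] by (simp add: pr)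
    show "(\<integral>\<omega>. Z p \<omega> * Z q \<omega> \<partial>M) = 0"
      using P.indep_vars_lebesgue_integral[OF _ ind2 i] that Zi by (simp add: pr)
  qed
  have Zint: "integrable M (\<lambda>\<omega>. Z p \<omega> * Z q \<omega>)" if "p \<in> J" "q \<in> J" for p q
    using Zpq Zsq that by (cases "p = q") auto
  note SQ = P.sq_sum[OF finJ Zint Zpq(2) Zsq(2)]
  define c where "c i p = mat_pow A (t - fst p) $ i $ snd p / real t" for i p
  define F where "F = (\<Sum>k\<in>{1..t}. fro (mat_pow A (t - k)))"
  have tpos: "real t > 0" using assms(9) by simp
  have comp: "(theta_hat A X t \<omega> - \<theta> *\<^sub>R (\<chi> i. 1)) $ i = (\<Sum>p\<in>J. c i p * Z p \<omega>)" for \<omega> i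
  proof -
    have t1: "t - 1 + 1 = t" using assms(9) by simp
    have "(theta_hat A X t \<omega> - \<theta> *\<^sub>R (\<chi> i. 1)) $ i = est_aux A X (t - 1) \<omega> $ i - \<theta>"
      by (simp add: theta_hat_def)
    also have "\<dots> = (1 / real t) * (\<Sum>k\<in>{1..t}. \<Sum>l\<in>UNIV. mat_pow A (t - k) $ i $ l * (X k l \<omega> - \<theta>))"
      using est_comp[OF assms(8), of X "t - 1" \<omega> i \<theta>] by (simp only: t1)
    also have "\<dots> = (\<Sum>k\<in>{1..t}. \<Sum>l\<in>UNIV. c i (k, l) * Z (k, l) \<omega>)"
      by (simp add: sum_distrib_left c_def ZJ)
    also have "\<dots> = (\<Sum>p\<in>J. c i p * Z p \<omega>)"
      unfolding J_def by (simp add: sum.cartesian_product)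
    finally show ?thesis .
  qed
  have den_eq: "(\<lambda>\<omega>. (norm (theta_hat A X t \<omega> - \<theta> *\<^sub>R (\<chi> i. 1)))\<^sup>2)
      = (\<lambda>\<omega>. \<Sum>i\<in>UNIV. (\<Sum>p\<in>J. c i p * Z p \<omega>)\<^sup>2)"
    by (rule ext) (simp only: norm_sq_vec comp)
  have den: "(\<integral>\<omega>. (norm (theta_hat A X t \<omega> - \<theta> *\<^sub>R (\<chi> i. 1)))\<^sup>2 \<partial>M)
      = \<sigma>2 * (\<Sum>i\<in>UNIV. \<Sum>p\<in>J. (c i p)\<^sup>2)"
    unfolding den_eq by (simp add: integral_sum SQ sum_distrib_left)
  have cF: "(\<Sum>i\<in>UNIV. \<Sum>p\<in>J. (c i p)\<^sup>2) = F / (real t)\<^sup>2"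
  proof -
    have "(\<Sum>i\<in>UNIV. \<Sum>p\<in>J. (c i p)\<^sup>2) = (\<Sum>i\<in>UNIV. \<Sum>k\<in>{1..t}. \<Sum>l\<in>UNIV. (c i (k, l))\<^sup>2)"
      unfolding J_def by (simp add: sum.cartesian_product)
    also have "\<dots> = (\<Sum>k\<in>{1..t}. \<Sum>i\<in>UNIV. \<Sum>l\<in>UNIV. (c i (k, l))\<^sup>2)"
      by (rule sum.swap)
    also have "\<dots> = (\<Sum>k\<in>{1..t}. fro (mat_pow A (t - k)) / (real t)\<^sup>2)"
      by (simp add: c_def fro_def power_divide sum_divide_distrib)
    also have "\<dots> = F / (real t)\<^sup>2" by (simp add: F_def sum_divide_distrib)
    finally show ?thesis .
  qed
  have sm: "sample_mean X t \<omega> - \<theta> = (\<Sum>p\<in>J. (1 / (N * real t)) * Z p \<omega>)" for \<omega>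
  proof -
    have cardJ: "card J = t * CARD('n)" by (simp add: J_def card_cartesian_product)
    have "(\<Sum>p\<in>J. Z p \<omega>) = (\<Sum>k\<in>{1..t}. \<Sum>l\<in>UNIV. Z (k, l) \<omega>)"
      unfolding J_def by (simp add: sum.cartesian_product)
    also have "\<dots> = (\<Sum>k\<in>{1..t}. \<Sum>l\<in>UNIV. X k l \<omega> - \<theta>)"
      by (simp only: ZJ)
    also have "\<dots> = (\<Sum>k\<in>{1..t}. \<Sum>l\<in>UNIV. X k l \<omega>) - N * real t * \<theta>"
      by (simp add: sum_subtractf N_def)
    also have "(\<Sum>k\<in>{1..t}. \<Sum>l\<in>UNIV. X k l \<omega>) = (\<Sum>l\<in>UNIV. \<Sum>k\<in>{1..t}. X k l \<omega>)"
      by (rule sum.swap)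
    finally have e: "(\<Sum>p\<in>J. Z p \<omega>) = (\<Sum>l\<in>UNIV. \<Sum>k\<in>{1..t}. X k l \<omega>) - N * real t * \<theta>" .
    have Npos: "N > 0" by (simp add: N_def)
    have "(\<Sum>p\<in>J. (1 / (N * real t)) * Z p \<omega>) = (1 / (N * real t)) * (\<Sum>p\<in>J. Z p \<omega>)"
      by (simp add: sum_distrib_left)
    also have "\<dots> = (1 / (N * real t)) * (\<Sum>l\<in>UNIV. \<Sum>k\<in>{1..t}. X k l \<omega>) - \<theta>"
      unfolding e using Npos tpos by (simp add: field_simps)
    finally show ?thesis by (simp add: sample_mean_def N_def)
  qed
  have one: "(norm (\<chi> i. 1 :: real^'n))\<^sup>2 = N" by (simp add: norm_sq_vec N_def)
  have num_eq: "(\<lambda>\<omega>. (norm ((sample_mean X t \<omega> - \<theta>) *\<^sub>R (\<chi> i. 1 :: real^'n)))\<^sup>2)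
     = (\<lambda>\<omega>. N * (\<Sum>p\<in>J. (1 / (N * real t)) * Z p \<omega>)\<^sup>2)"
    by (rule ext) (simp only: norm_scaleR power_mult_distrib one sm power2_abs mult.commute)
  have num: "(\<integral>\<omega>. (norm ((sample_mean X t \<omega> - \<theta>) *\<^sub>R (\<chi> i. 1 :: real^'n)))\<^sup>2 \<partial>M) = \<sigma>2 / real t"
  proof -
    have cardJ: "card J = t * CARD('n)" by (simp add: J_def card_cartesian_product)
    have Npos: "N > 0" by (simp add: N_def)
    have "(\<integral>\<omega>. (norm ((sample_mean X t \<omega> - \<theta>) *\<^sub>R (\<chi> i. 1 :: real^'n)))\<^sup>2 \<partial>M)
       = N * (\<sigma>2 * (\<Sum>p\<in>J. (1 / (N * real t))\<^sup>2))"
      unfolding num_eq using SQ(2)[where c="\<lambda>_. 1 / (N * real t)"] by simp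
    also have "\<dots> = N * (\<sigma>2 * (real t * N) * (1 / (N * real t))\<^sup>2)"
      by (simp add: cardJ N_def)
    also have "\<dots> = \<sigma>2 / real t" using Npos tpos by (simp add: field_simps power2_eq_square)
    finally show ?thesis .
  qed
  have stk: "stochastic_matrix (mat_pow A (t - k))" for k by (rule stoch_pow[OF assms(8)])
  have F1: "real t \<le> F"
  proof -
    have "(\<Sum>k\<in>{1..t}. (1::real)) \<le> F" unfolding F_def
      by (rule sum_mono) (rule fro_bounds(1)[OF stk])
    then show ?thesis by simp
  qed
  have F2: "F \<le> N * real t"
  proof -
    have "F \<le> (\<Sum>k\<in>{1..t}. N)" unfolding F_def N_def
      by (rule sum_mono) (rule fro_bounds(2)[OF stk])
    then show ?thesis by (simp add: mult.commute)
  qed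
  have F3: "real t * (1 + 1 / N) \<le> F" if red: "\<not> irreducible_matrix A"
  proof -
    have "(\<Sum>k\<in>{1..t}. 1 + 1 / N) \<le> F" unfolding F_def N_def
      by (rule sum_mono) (rule fro_reducible[OF assms(8) red])
    then show ?thesis by (simp add: mult.commute)
  qed
  have Fpos: "F > 0" using F1 tpos by linarith
  have Npos: "N > 0" by (simp add: N_def)
  have pr: "perf_ratio M (\<integral>\<omega>. Y \<omega> \<partial>M) A X t = real t / F"
  proof -
    have "perf_ratio M (\<integral>\<omega>. Y \<omega> \<partial>M) A X t = (\<sigma>2 / real t) / (\<sigma>2 * (F / (real t)\<^sup>2))"
      unfolding perf_ratio_def \<theta>_def[symmetric] num den cF ..
    also have "\<dots> = real t / F" using \<sigma>pos tpos Fpos by (simp add: field_simps power2_eq_square)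
    finally show ?thesis .
  qed
  have b1: "1 / N \<le> real t / F"
  proof -
    have "1 / N = real t / (N * real t)" using tpos by simp
    also have "\<dots> \<le> real t / F" using F2 Fpos tpos by (intro divide_left_mono) auto
    finally show ?thesis .
  qed
  have b2: "real t / F \<le> 1" using F1 Fpos by simp
  have b3: "real t / F \<le> 1 - 1 / (N + 1)" if red: "\<not> irreducible_matrix A"
  proof -
    have e1: "real t / (real t * (1 + 1 / N)) = 1 / (1 + 1 / N)" using tpos by simp
    have e2: "1 / (1 + 1 / N) = N / (N + 1)" using Npos by (simp add: field_simps)
    have e3: "N / (N + 1) = 1 - 1 / (N + 1)" using Npos by (simp add: field_simps)
    have e: "1 - 1 / (N + 1) = real t / (real t * (1 + 1 / N))"
      using e1 e2 e3 by simp
    show ?thesis unfolding e using F3[OF red] Fpos tpos Npos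
      by (intro divide_left_mono) (auto intro!: mult_pos_pos add_pos_pos)
  qed
  show ?thesis using b1 b2 b3 pr by (simp add: N_def)
qed

end
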